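(* Let $n\geq 2$ and let $H$ be a complex Hadamard matrix of order $n$ with rows $h_1,\dots,h_n$ (each $h_i$ a $1\times n$ row vector). Let $K$ be the $n^2\times n^2$ block matrix whose $(i,j)$-th block (of size $n\times n$) is $h_j^{\ast}h_i$, for $1\le i,j\le n$. Then $Q:=K-I_{n^2}$ is a Seidel matrix associated to an $\left(n^{2},\frac{n(n+1)}{2}\right)$ complex equiangular tight frame.
   Context: A complex Hadamard matrix of order $n$ is an $n\times n$ complex matrix $H$ whose entries all have modulus $1$ and which satisfies $HH^{\ast}=nI_n$, where $^\ast$ denotes conjugate transpose. An $(N,k)$ frame is a Parseval frame of $N$ vectors $f_1,\dots,f_N$ in $\mathbb{C}^k$ (usual inner product), i.e. $\sum_{i=1}^N|\langle x,f_i\rangle|^2=\|x\|^2$ for all $x\in\mathbb{C}^k$; its analysis operator $V$ is the $N\times k$ matrix with $(Vx)_j=\langle x,f_j\rangle$. An $(N,k)$ complex equiangular tight frame (CETF) is an $(N,k)$ frame that is uniform ($\|f_i\|$ constant) and equiangular ($|\langle f_i,f_j\rangle|$ constant for $i\neq j$); for such a frame $VV^{\ast}=\frac{k}{N}I_N+\sqrt{\frac{k(N-k)}{N^2(N-1)}}\,Q$ where $Q$ is a self-adjoint matrix with zero diagonal and all off-diagonal entries of modulus $1$; $Q$ is called the Seidel matrix associated with the frame. *)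

theory Defs
  imports Complex_Main
begin

text \<open>Vectors in C^k are represented as functions nat => complex (coordinates j < k);
  n x m matrices as functions nat => nat => complex with indices below the bounds.
  Indices are 0-based.\<close>

definition cinner :: "nat \<Rightarrow> (nat \<Rightarrow> complex) \<Rightarrow> (nat \<Rightarrow> complex) \<Rightarrow> complex" where
  "cinner k x y = (\<Sum>j<k. x j * cnj (y j))"

definition cnorm :: "nat \<Rightarrow> (nat \<Rightarrow> complex) \<Rightarrow> real" where
  "cnorm k x = sqrt (\<Sum>j<k. (cmod (x j))^2)"

definition complex_hadamard :: "nat \<Rightarrow> (nat \<Rightarrow> nat \<Rightarrow> complex) \<Rightarrow> bool" where
  "complex_hadamard n H \<longleftrightarrow>
     (\<forall>i<n. \<forall>j<n. cmod (H i j) = 1) \<and>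
     (\<forall>i<n. \<forall>j<n. (\<Sum>l<n. H i l * cnj (H j l)) = (if i = j then of_nat n else 0))"

definition parseval_frame :: "nat \<Rightarrow> nat \<Rightarrow> (nat \<Rightarrow> nat \<Rightarrow> complex) \<Rightarrow> bool" where
  "parseval_frame N k f \<longleftrightarrow>
     (\<forall>x :: nat \<Rightarrow> complex. (\<Sum>i<N. (cmod (cinner k x (f i)))^2) = (cnorm k x)^2)"

definition cetf :: "nat \<Rightarrow> nat \<Rightarrow> (nat \<Rightarrow> nat \<Rightarrow> complex) \<Rightarrow> bool" where
  "cetf N k f \<longleftrightarrow> parseval_frame N k f \<and>
     (\<exists>c. \<forall>i<N. cnorm k (f i) = c) \<and>
     (\<exists>c. \<forall>i<N. \<forall>j<N. i \<noteq> j \<longrightarrow> cmod (cinner k (f i) (f j)) = c)"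

text \<open>Analysis operator V (N x k): (V x)_j = <x, f_j>, i.e. V j l = cnj (f j l).\<close>
definition analysis_op :: "(nat \<Rightarrow> nat \<Rightarrow> complex) \<Rightarrow> nat \<Rightarrow> nat \<Rightarrow> complex" where
  "analysis_op f j l = cnj (f j l)"

definition seidel_of_cetf :: "nat \<Rightarrow> nat \<Rightarrow> (nat \<Rightarrow> nat \<Rightarrow> complex) \<Rightarrow> (nat \<Rightarrow> nat \<Rightarrow> complex) \<Rightarrow> bool" where
  "seidel_of_cetf N k f Q \<longleftrightarrow> cetf N k f \<and>
     (\<forall>i<N. \<forall>j<N. Q j i = cnj (Q i j)) \<and>
     (\<forall>i<N. Q i i = 0) \<and>
     (\<forall>i<N. \<forall>j<N. i \<noteq> j \<longrightarrow> cmod (Q i j) = 1) \<and>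
     (\<forall>i<N. \<forall>j<N.
        (\<Sum>l<k. analysis_op f i l * cnj (analysis_op f j l)) =
          (if i = j then of_real (real k / real N) else 0)
          + of_real (sqrt (real k * (real N - real k) / ((real N)^2 * (real N - 1)))) * Q i j)"

text \<open>Block matrix K of size n^2 x n^2: block (i,j) is h_j^* h_i, so the entry in row
  i*n+a, column j*n+b is cnj (H j a) * H i b.\<close>
definition hadamard_block :: "nat \<Rightarrow> (nat \<Rightarrow> nat \<Rightarrow> complex) \<Rightarrow> nat \<Rightarrow> nat \<Rightarrow> complex" where
  "hadamard_block n H r s = cnj (H (s div n) (r mod n)) * H (r div n) (s mod n)"

end

theory Submission
  imports Defs "Jordan_Normal_Form.Determinant"
begin


lemma col_orth:
  fixes H :: "nat \<Rightarrow> nat \<Rightarrow> complex"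
  assumes n: "n > 0" and row: "\<forall>i<n. \<forall>j<n. (\<Sum>l<n. H i l * cnj (H j l)) = (if i = j then of_nat n else 0)"
  and a: "a < n" and b: "b < n"
  shows "(\<Sum>l<n. cnj (H l a) * H l b) = (if a = b then of_nat n else 0)"
proof -
  define A where "A = mat n n (\<lambda>(i,j). H i j)"
  define B where "B = mat n n (\<lambda>(i,j). cnj (H j i) / of_nat n)"
  have AB: "A * B = 1\<^sub>m n"
  proof (rule eq_matI)
    fix i j assume ij: "i < dim_row (1\<^sub>m n :: complex mat)" "j < dim_col (1\<^sub>m n :: complex mat)"
    hence "(A * B) $$ (i,j) = (\<Sum>l<n. H i l * (cnj (H j l) / of_nat n))"
      by (simp add: A_def B_def scalar_prod_def row_def col_def lessThan_atLeast0)
    also have "\<dots> = (\<Sum>l<n. H i l * cnj (H j l)) / of_nat n"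
      by (simp add: sum_divide_distrib)
    also have "\<dots> = 1\<^sub>m n $$ (i,j)" using row ij n by simp
    finally show "(A * B) $$ (i,j) = 1\<^sub>m n $$ (i,j)" .
  qed (auto simp: A_def B_def)
  have BA: "B * A = 1\<^sub>m n"
    by (rule mat_mult_left_right_inverse[OF _ _ AB]) (auto simp: A_def B_def)
  have "(B * A) $$ (a,b) = (\<Sum>l<n. cnj (H l a) * H l b) / of_nat n"
    using a b by (simp add: A_def B_def scalar_prod_def row_def col_def lessThan_atLeast0 sum_divide_distrib)
  with BA a b n show ?thesis
    by (auto simp: field_simps split: if_splits)
qed



definition Pset :: "nat \<Rightarrow> (nat \<times> nat) set" where
  "Pset n = {(u,v). u \<le> v \<and> v < n}"

lemma Pset_Suc: "Pset (Suc n) = Pset n \<union> (\<lambda>u. (u,n)) ` {..n}"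
  by (auto simp: Pset_def)

lemma Pset_finite: "finite (Pset n)"
  by (rule finite_subset[of _ "{..<n} \<times> {..<n}"]) (auto simp: Pset_def)

lemma Pset_card: "card (Pset n) * 2 = n * (n + 1)"
proof (induction n)
  case 0 then show ?case by (simp add: Pset_def)
next
  case (Suc n)
  have d: "Pset n \<inter> (\<lambda>u. (u,n)) ` {..n} = {}" by (auto simp: Pset_def)
  have "card (Pset (Suc n)) = card (Pset n) + card ((\<lambda>u. (u,n)) ` {..n})"
    unfolding Pset_Suc by (rule card_Un_disjoint[OF Pset_finite _ d]) simp
  also have "card ((\<lambda>u. (u,n)) ` {..n}) = Suc n"
    by (subst card_image) (auto simp: inj_on_def)
  finally show ?case using Suc by simp
qed

lemma sum_square_sym:
  fixes F :: "nat \<Rightarrow> nat \<Rightarrow> 'a::comm_monoid_add"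
  shows "(\<Sum>u<n. \<Sum>v<n. F u v) = (\<Sum>(u,v)\<in>Pset n. if u = v then F u u else F u v + F v u)"
proof (induction n)
  case 0 then show ?case by (simp add: Pset_def)
next
  case (Suc n)
  let ?G = "\<lambda>(u,v). if u = v then F u u else F u v + F v u"
  have d: "Pset n \<inter> (\<lambda>u. (u,n)) ` {..n} = {}" by (auto simp: Pset_def)
  have "sum ?G (Pset (Suc n)) = sum ?G (Pset n) + sum ?G ((\<lambda>u. (u,n)) ` {..n})"
    unfolding Pset_Suc by (rule sum.union_disjoint[OF Pset_finite _ d]) simp
  also have "sum ?G ((\<lambda>u. (u,n)) ` {..n}) = (\<Sum>u\<le>n. ?G (u,n))"
    by (subst sum.reindex) (auto simp: inj_on_def)
  also have "\<dots> = (\<Sum>u<n. F u n + F n u) + F n n"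
    by (simp add: lessThan_Suc_atMost[symmetric])
  finally have 1: "sum ?G (Pset (Suc n)) = sum ?G (Pset n) + ((\<Sum>u<n. F u n + F n u) + F n n)" .
  have "(\<Sum>u<Suc n. \<Sum>v<Suc n. F u v) = (\<Sum>u<n. \<Sum>v<n. F u v) + ((\<Sum>u<n. F u n) + (\<Sum>v<n. F n v) + F n n)"
    by (simp add: sum.distrib add_ac)
  then show ?case using 1 Suc by (simp add: sum.distrib add_ac)
qed

lemma sum_sq_split:
  fixes F :: "nat \<Rightarrow> 'a::comm_monoid_add"
  shows "(\<Sum>r<n*n. F r) = (\<Sum>i<n. \<Sum>a<n. F (i*n+a))"
proof -
  have "\<And>m. (\<Sum>r<m*n. F r) = (\<Sum>i<m. \<Sum>a<n. F (i*n+a))"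
  proof -
    fix m show "(\<Sum>r<m*n. F r) = (\<Sum>i<m. \<Sum>a<n. F (i*n+a))"
    proof (induction m)
      case 0 then show ?case by simp
    next
      case (Suc m)
      have "(\<Sum>r<Suc m*n. F r) = (\<Sum>r<m*n. F r) + (\<Sum>r\<in>{m*n..<m*n+n}. F r)"
        by (simp add: sum.atLeastLessThan_concat[symmetric] lessThan_atLeast0 add.commute)
      also have "(\<Sum>r\<in>{m*n..<m*n+n}. F r) = (\<Sum>a<n. F (m*n+a))"
        using sum.shift_bounds_nat_ivl[of F 0 "m*n" n] by (simp add: lessThan_atLeast0 add.commute)
      finally show ?case using Suc by simp
    qed
  qed
  then show ?thesis .
qed



definition bet :: "nat \<Rightarrow> nat \<Rightarrow> real" where
  "bet u v = (if u = v then 1 else 1 / sqrt 2)"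

definition Zf :: "(nat \<Rightarrow> nat \<Rightarrow> complex) \<Rightarrow> nat \<Rightarrow> nat \<Rightarrow> nat \<Rightarrow> nat \<Rightarrow> complex" where
  "Zf H i a u v = (if i = u then cnj (H v a) else 0)"

definition Vm :: "nat \<Rightarrow> (nat \<Rightarrow> nat \<Rightarrow> complex) \<Rightarrow> nat \<Rightarrow> nat \<Rightarrow> nat \<Rightarrow> nat \<Rightarrow> complex" where
  "Vm n H i a u v = of_real (bet u v / sqrt n) * (Zf H i a u v + of_bool (u \<noteq> v) * Zf H i a v u)"

lemma cc_sq: "of_real c * cnj (of_real c) = (of_real (c^2) :: complex)"
  by (simp add: power2_eq_square)

lemma Vm_prod:
  assumes n: "n > 0"
  shows "Vm n H i a u v * cnj (Vm n H j b u v) =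
    (if u = v then Zf H i a u u * cnj (Zf H j b u u + Zf H j b u u) / (2 * of_nat n)
     else Zf H i a u v * cnj (Zf H j b u v + Zf H j b v u) / (2 * of_nat n)
        + Zf H i a v u * cnj (Zf H j b v u + Zf H j b u v) / (2 * of_nat n))"
proof (cases "u = v")
  case True
  define c where "c = bet u v / sqrt n"
  have b: "c^2 = 1 / n" using True n by (simp add: c_def bet_def power_divide)
  have cc: "of_real c * cnj (of_real c) = (1 / of_nat n :: complex)"
    unfolding cc_sq b by simp
  have "Vm n H i a u v * cnj (Vm n H j b u v) = (of_real c * cnj (of_real c)) *
     (Zf H i a u u * cnj (Zf H j b u u))"
    using True unfolding Vm_def c_def by (simp add: algebra_simps)
  also have "\<dots> = Zf H i a u u * cnj (Zf H j b u u + Zf H j b u u) / (2 * of_nat n)"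
    unfolding cc by (simp add: field_simps)
  finally show ?thesis using True by simp
next
  case False
  have b: "(bet u v / sqrt n)^2 = 1 / (2 * n)" using False n by (simp add: bet_def power_divide power_mult_distrib)
  define c where "c = bet u v / sqrt n"
  have cc: "of_real c * cnj (of_real c) = (1 / (2 * of_nat n) :: complex)"
    unfolding cc_sq c_def b by simp
  have "Vm n H i a u v * cnj (Vm n H j b u v) = (of_real c * cnj (of_real c)) *
     ((Zf H i a u v + Zf H i a v u) * cnj (Zf H j b u v + Zf H j b v u))"
    using False unfolding Vm_def c_def by (simp add: algebra_simps)
  also have "\<dots> = ((Zf H i a u v + Zf H i a v u) * cnj (Zf H j b u v + Zf H j b v u)) / (2 * of_nat n)"
    unfolding cc by simp
  finally show ?thesis using False by (simp add: algebra_simps add_divide_distrib)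
qed




lemma S1:
  assumes "i < n" "j < n"
  shows "(\<Sum>u<n. \<Sum>v<n. Zf H i a u v * cnj (Zf H j b u v)) = (if i = j then (\<Sum>v<n. cnj (H v a) * H v b) else 0)"
proof -
  have "(\<Sum>u<n. \<Sum>v<n. Zf H i a u v * cnj (Zf H j b u v)) = (\<Sum>u<n. if u = i then (if i = j then (\<Sum>v<n. cnj (H v a) * H v b) else 0) else 0)"
    by (rule sum.cong) (auto simp: Zf_def)
  also have "\<dots> = (if i = j then (\<Sum>v<n. cnj (H v a) * H v b) else 0)"
    using assms by (simp add: sum.delta)
  finally show ?thesis .
qed

lemma S2:
  assumes "i < n" "j < n"
  shows "(\<Sum>u<n. \<Sum>v<n. Zf H i a u v * cnj (Zf H j b v u)) = cnj (H j a) * H i b"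
proof -
  have "(\<Sum>u<n. \<Sum>v<n. Zf H i a u v * cnj (Zf H j b v u)) = (\<Sum>u<n. if u = i then (\<Sum>v<n. if v = j then cnj (H j a) * H i b else 0) else 0)"
  proof (rule sum.cong)
    fix u assume "u \<in> {..<n}"
    show "(\<Sum>v<n. Zf H i a u v * cnj (Zf H j b v u)) = (if u = i then (\<Sum>v<n. if v = j then cnj (H j a) * H i b else 0) else 0)"
    proof (cases "u = i")
      case True
      have "(\<Sum>v<n. Zf H i a u v * cnj (Zf H j b v u)) = (\<Sum>v<n. if v = j then cnj (H j a) * H i b else 0)"
        by (rule sum.cong) (auto simp: Zf_def True)
      then show ?thesis using True by simp
    qed (simp add: Zf_def)
  qed simp
  also have "\<dots> = cnj (H j a) * H i b"
    using assms by (simp add: sum.delta)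
  finally show ?thesis .
qed

lemma gram_ia:
  fixes H :: "nat \<Rightarrow> nat \<Rightarrow> complex"
  assumes n: "n > 0" and col: "\<And>a b. a < n \<Longrightarrow> b < n \<Longrightarrow> (\<Sum>l<n. cnj (H l a) * H l b) = (if a = b then of_nat n else 0)"
  and ij: "i < n" "a < n" "j < n" "b < n"
  shows "(\<Sum>(u,v)\<in>Pset n. Vm n H i a u v * cnj (Vm n H j b u v)) =
     (if i = j \<and> a = b then 1/2 else 0) + cnj (H j a) * H i b / (2 * of_nat n)"
proof -
  define F where "F u v = Zf H i a u v * cnj (Zf H j b u v + Zf H j b v u) / (2 * of_nat n)" for u v
  have "(\<Sum>(u,v)\<in>Pset n. Vm n H i a u v * cnj (Vm n H j b u v)) =
        (\<Sum>(u,v)\<in>Pset n. if u = v then F u u else F u v + F v u)"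
    by (rule sum.cong) (auto simp: Vm_prod[OF n] F_def)
  also have "\<dots> = (\<Sum>u<n. \<Sum>v<n. F u v)"
    by (rule sum_square_sym[symmetric])
  also have "\<dots> = ((\<Sum>u<n. \<Sum>v<n. Zf H i a u v * cnj (Zf H j b u v)) + (\<Sum>u<n. \<Sum>v<n. Zf H i a u v * cnj (Zf H j b v u))) / (2 * of_nat n)"
    by (simp add: F_def sum_divide_distrib[symmetric] sum.distrib algebra_simps add_divide_distrib)
  also have "\<dots> = ((if i = j then (\<Sum>v<n. cnj (H v a) * H v b) else 0) + cnj (H j a) * H i b) / (2 * of_nat n)"
    by (simp add: S1 S2 ij)
  also have "\<dots> = (if i = j \<and> a = b then 1/2 else 0) + cnj (H j a) * H i b / (2 * of_nat n)"
    using col[OF ij(2,4)] n by (auto simp: field_simps)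
  finally show ?thesis .
qed




lemma ZZ:
  fixes H :: "nat \<Rightarrow> nat \<Rightarrow> complex"
  assumes row: "\<forall>i<n. \<forall>j<n. (\<Sum>l<n. H i l * cnj (H j l)) = (if i = j then of_nat n else 0)"
  and xy: "x < n" "y < n" "y' < n"
  shows "(\<Sum>i<n. \<Sum>a<n. Zf H i a x y * cnj (Zf H i a x' y')) = (if x = x' \<and> y = y' then of_nat n else 0)"
proof -
  have r: "(\<Sum>a<n. cnj (H y a) * H y' a) = (if y = y' then of_nat n else 0)"
    using row xy by (auto simp: mult.commute)
  have r2: "(\<Sum>a<n. cnj (H y a) * H y a) = of_nat n" using row xy(2) by (simp add: mult.commute)
  have "(\<Sum>i<n. \<Sum>a<n. Zf H i a x y * cnj (Zf H i a x' y')) =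
     (\<Sum>i<n. if i = x then (if x = x' then (\<Sum>a<n. cnj (H y a) * H y' a) else 0) else 0)"
    by (rule sum.cong) (auto simp: Zf_def)
  also have "\<dots> = (if x = x' \<and> y = y' then of_nat n else 0)"
    using xy r r2 by (auto simp: sum.delta)
  finally show ?thesis .
qed

lemma Vm_pt:
  "Vm n H i a u v * cnj (Vm n H i a u' v') =
    of_real (bet u v / sqrt n) * cnj (of_real (bet u' v' / sqrt n)) *
    (Zf H i a u v * cnj (Zf H i a u' v')
     + of_bool (u' \<noteq> v') * (Zf H i a u v * cnj (Zf H i a v' u'))
     + of_bool (u \<noteq> v) * (Zf H i a v u * cnj (Zf H i a u' v'))
     + of_bool (u \<noteq> v) * of_bool (u' \<noteq> v') * (Zf H i a v u * cnj (Zf H i a v' u')))"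
proof -
  define C where "C = of_real (bet u v / sqrt n) * cnj (of_real (bet u' v' / sqrt n) :: complex)"
  define c1 where "c1 = (of_real (bet u v / sqrt n) :: complex)"
  define c2 where "c2 = (of_real (bet u' v' / sqrt n) :: complex)"
  have "Vm n H i a u v = c1 * (Zf H i a u v + of_bool (u \<noteq> v) * Zf H i a v u)"
    by (simp add: Vm_def c1_def)
  moreover have "Vm n H i a u' v' = c2 * (Zf H i a u' v' + of_bool (u' \<noteq> v') * Zf H i a v' u')"
    by (simp add: Vm_def c2_def)
  ultimately show ?thesis unfolding c1_def[symmetric] c2_def[symmetric]
    by (cases "u = v"; cases "u' = v'") (simp_all add: ring_distribs)
qed

lemma Vm_expand:
  "(\<Sum>i<n. \<Sum>a<n. Vm n H i a u v * cnj (Vm n H i a u' v')) =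
    of_real (bet u v / sqrt n) * cnj (of_real (bet u' v' / sqrt n)) *
    ((\<Sum>i<n. \<Sum>a<n. Zf H i a u v * cnj (Zf H i a u' v'))
     + of_bool (u' \<noteq> v') * (\<Sum>i<n. \<Sum>a<n. Zf H i a u v * cnj (Zf H i a v' u'))
     + of_bool (u \<noteq> v) * (\<Sum>i<n. \<Sum>a<n. Zf H i a v u * cnj (Zf H i a u' v'))
     + of_bool (u \<noteq> v) * of_bool (u' \<noteq> v') * (\<Sum>i<n. \<Sum>a<n. Zf H i a v u * cnj (Zf H i a v' u')))"
  unfolding Vm_pt by (simp only: sum.distrib sum_distrib_left[symmetric])

lemma colV:
  fixes H :: "nat \<Rightarrow> nat \<Rightarrow> complex"
  assumes n: "n > 0" and row: "\<forall>i<n. \<forall>j<n. (\<Sum>l<n. H i l * cnj (H j l)) = (if i = j then of_nat n else 0)"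
  and p: "(u,v) \<in> Pset n" and q: "(u',v') \<in> Pset n"
  shows "(\<Sum>i<n. \<Sum>a<n. Vm n H i a u v * cnj (Vm n H i a u' v')) = (if (u,v) = (u',v') then 1 else 0)"
proof -
  have lt: "u < n" "v < n" "u' < n" "v' < n" "u \<le> v" "u' \<le> v'" using p q by (auto simp: Pset_def)
  note Z = ZZ[OF row]
  have t2: "of_bool (u' \<noteq> v') * (\<Sum>i<n. \<Sum>a<n. Zf H i a u v * cnj (Zf H i a v' u')) = 0"
    using lt by (cases "u = v' \<and> v = u'") (auto simp: Z)
  have t3: "of_bool (u \<noteq> v) * (\<Sum>i<n. \<Sum>a<n. Zf H i a v u * cnj (Zf H i a u' v')) = 0"
    using lt by (cases "v = u' \<and> u = v'") (auto simp: Z)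
  have t1: "(\<Sum>i<n. \<Sum>a<n. Zf H i a u v * cnj (Zf H i a u' v')) = (if (u,v) = (u',v') then of_nat n else 0)"
    using lt by (simp add: Z)
  have t4: "(\<Sum>i<n. \<Sum>a<n. Zf H i a v u * cnj (Zf H i a v' u')) = (if (u,v) = (u',v') then of_nat n else 0)"
    using lt by (simp add: Z)
  show ?thesis
  proof (cases "(u,v) = (u',v')")
    case True
    hence e: "u' = u" "v' = v" by auto
    have c: "of_real (bet u v / sqrt n) * cnj (of_real (bet u v / sqrt n)) * (of_nat n + of_bool (u \<noteq> v) * of_bool (u \<noteq> v) * of_nat n) = (1::complex)"
    proof (cases "u = v")
      case True then show ?thesis using n by (simp add: bet_def of_real_mult[symmetric])
    next
      case False
      have "(bet u v / sqrt n)^2 * (n * 2) = 1" using False n by (simp add: bet_def power_divide power_mult_distrib)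
      hence "complex_of_real ((bet u v / sqrt n)^2 * (n * 2)) = 1" by simp
      then show ?thesis using False unfolding cc_sq by (simp add: algebra_simps)
    qed
    show ?thesis unfolding Vm_expand t2 t3 t1 t4 using True c e by simp
  next
    case False
    show ?thesis unfolding Vm_expand t2 t3 t1 t4 if_not_P[OF False] by simp
  qed
qed




definition Vr :: "nat \<Rightarrow> (nat \<Rightarrow> nat \<Rightarrow> complex) \<Rightarrow> nat \<Rightarrow> nat \<times> nat \<Rightarrow> complex" where
  "Vr n H r p = Vm n H (r div n) (r mod n) (fst p) (snd p)"

lemma divmod_lt: assumes "r < (n::nat)^2" shows "r div n < n" "r mod n < n"
proof -
  have n: "n > 0" using assms by (cases n) auto
  show "r mod n < n" using n by simp
  show "r div n < n" using assms n by (simp add: power2_eq_square div_less_iff_less_mult)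
qed

lemma gram_r:
  fixes H :: "nat \<Rightarrow> nat \<Rightarrow> complex"
  assumes n: "n > 0" and col: "\<And>a b. a < n \<Longrightarrow> b < n \<Longrightarrow> (\<Sum>l<n. cnj (H l a) * H l b) = (if a = b then of_nat n else 0)"
  and r: "r < n^2" and s: "s < n^2"
  shows "(\<Sum>p\<in>Pset n. Vr n H r p * cnj (Vr n H s p)) =
     (if r = s then 1/2 else 0) + hadamard_block n H r s / (2 * of_nat n)"
proof -
  have e: "(r div n = s div n \<and> r mod n = s mod n) = (r = s)"
    by (metis div_mult_mod_eq)
  have "(\<Sum>p\<in>Pset n. Vr n H r p * cnj (Vr n H s p)) =
     (\<Sum>(u,v)\<in>Pset n. Vm n H (r div n) (r mod n) u v * cnj (Vm n H (s div n) (s mod n) u v))"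
    by (rule sum.cong) (auto simp: Vr_def)
  also have "\<dots> = (if r div n = s div n \<and> r mod n = s mod n then 1/2 else 0) +
       cnj (H (s div n) (r mod n)) * H (r div n) (s mod n) / (2 * of_nat n)"
    by (rule gram_ia[OF n col divmod_lt[OF r] divmod_lt[OF s]])
  finally show ?thesis unfolding e hadamard_block_def .
qed

lemma col_r:
  fixes H :: "nat \<Rightarrow> nat \<Rightarrow> complex"
  assumes n: "n > 0" and row: "\<forall>i<n. \<forall>j<n. (\<Sum>l<n. H i l * cnj (H j l)) = (if i = j then of_nat n else 0)"
  and p: "p \<in> Pset n" and q: "q \<in> Pset n"
  shows "(\<Sum>r<n^2. Vr n H r p * cnj (Vr n H r q)) = (if p = q then 1 else 0)"
proof -
  obtain u v u' v' where pq: "p = (u,v)" "q = (u',v')" by (cases p, cases q) auto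
  have "(\<Sum>r<n^2. Vr n H r p * cnj (Vr n H r q)) = (\<Sum>i<n. \<Sum>a<n. Vr n H (i*n+a) p * cnj (Vr n H (i*n+a) q))"
    unfolding power2_eq_square by (rule sum_sq_split)
  also have "\<dots> = (\<Sum>i<n. \<Sum>a<n. Vm n H i a u v * cnj (Vm n H i a u' v'))"
    by (intro sum.cong refl) (auto simp: Vr_def pq)
  also have "\<dots> = (if (u,v) = (u',v') then 1 else 0)"
    using colV[OF n row] p q pq by simp
  finally show ?thesis using pq by simp
qed




theorem lemma1:
  fixes n :: nat and H :: "nat \<Rightarrow> nat \<Rightarrow> complex"
  assumes "n \<ge> 2" and "complex_hadamard n H"
  shows "\<exists>f. seidel_of_cetf (n^2) (n * (n + 1) div 2) f
                (\<lambda>r s. hadamard_block n H r s - (if r = s then 1 else 0))"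
proof -
  have n: "n > 0" using assms(1) by simp
  have unim: "\<forall>i<n. \<forall>j<n. cmod (H i j) = 1"
    and row: "\<forall>i<n. \<forall>j<n. (\<Sum>l<n. H i l * cnj (H j l)) = (if i = j then of_nat n else 0)"
    using assms(2) unfolding complex_hadamard_def by auto
  have col: "\<And>a b. a < n \<Longrightarrow> b < n \<Longrightarrow> (\<Sum>l<n. cnj (H l a) * H l b) = (if a = b then of_nat n else 0)"
    using col_orth[OF n row] by blast
  define k where "k = n * (n + 1) div 2"
  define N where "N = n^2"
  have kc: "card (Pset n) = k" using Pset_card[of n] unfolding k_def by simp
  obtain g where g: "bij_betw g {..<k} (Pset n)"
    using finite_same_card_bij[of "{..<k}" "Pset n"] Pset_finite kc by auto
  define f where "f r l = cnj (Vr n H r (g l))" for r l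
  define Q where "Q = (\<lambda>r s. hadamard_block n H r s - (if r = s then 1 else 0))"
  have aop: "analysis_op f r l = Vr n H r (g l)" for r l
    by (simp add: analysis_op_def f_def)
  have G: "(\<Sum>l<k. analysis_op f r l * cnj (analysis_op f s l)) =
     (if r = s then 1/2 else 0) + hadamard_block n H r s / (2 * of_nat n)"
    if "r < N" "s < N" for r s
  proof -
    have "(\<Sum>l<k. analysis_op f r l * cnj (analysis_op f s l)) = (\<Sum>p\<in>Pset n. Vr n H r p * cnj (Vr n H s p))"
      unfolding aop by (rule sum.reindex_bij_betw[OF g])
    also have "\<dots> = (if r = s then 1/2 else 0) + hadamard_block n H r s / (2 * of_nat n)"
      by (rule gram_r[OF n col]) (use that in \<open>auto simp: N_def\<close>)
    finally show ?thesis .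
  qed
  have hbm: "cmod (hadamard_block n H r s) = 1" if "r < N" "s < N" for r s
    using that divmod_lt[of r n] divmod_lt[of s n] unim
    by (simp add: hadamard_block_def norm_mult N_def)
  have hbd: "hadamard_block n H r r = 1" if "r < N" for r
  proof -
    have "complex_of_real ((cmod (H (r div n) (r mod n)))^2) = 1"
      using that divmod_lt[of r n] unim by (simp add: N_def)
    then show ?thesis unfolding complex_norm_square hadamard_block_def by (simp add: mult.commute)
  qed
  have fa: "f r l = cnj (analysis_op f r l)" for r l by (simp add: analysis_op_def)
  have kr: "real k * 2 = real n * (real n + 1)"
  proof -
    have "k * 2 = n * (n + 1)" using Pset_card[of n] kc by simp
    then show ?thesis by (metis of_nat_1 of_nat_add of_nat_mult of_nat_numeral)
  qed
  have Nr: "real N = real n ^ 2" by (simp add: N_def)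
  have nr: "real n \<ge> 2" using assms(1) by simp
  have arg: "real k * (real N - real k) / ((real N)^2 * (real N - 1)) = (1 / (2 * real n))^2"
  proof -
    have kk: "real k = real n * (real n + 1) / 2" using kr by simp
    have ne: "real n ^ 2 - 1 \<noteq> 0" proof -
      have "real n ^ 2 \<ge> 2 * 2" using nr unfolding power2_eq_square by (rule mult_mono) (use nr in auto)
      then show ?thesis by simp
    qed
    have "real n ^ 2 - 1 = (real n - 1) * (real n + 1)" by (simp add: algebra_simps power2_eq_square)
    then show ?thesis unfolding kk Nr using nr ne
      by (simp add: field_simps power2_eq_square)
  qed
  have sq: "sqrt (real k * (real N - real k) / ((real N)^2 * (real N - 1))) = 1 / (2 * real n)"
    unfolding arg using nr by simp
  have kN: "real k / real N = (real n + 1) / (2 * real n)"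
    using kr nr unfolding Nr by (simp add: field_simps power2_eq_square)
  have parseval: "parseval_frame N k f"
    unfolding parseval_frame_def
  proof
    fix x :: "nat \<Rightarrow> complex"
    define y where "y r = cinner k x (f r)" for r
    have y: "y r = (\<Sum>l<k. x l * Vr n H r (g l))" for r
      by (simp add: y_def cinner_def f_def)
    have inj: "inj_on g {..<k}" using g by (simp add: bij_betw_def)
    have gP: "l < k \<Longrightarrow> g l \<in> Pset n" for l using g by (auto simp: bij_betw_def)
    have "(\<Sum>r<N. y r * cnj (y r)) = (\<Sum>r<N. \<Sum>l<k. \<Sum>l'<k. x l * cnj (x l') * (Vr n H r (g l) * cnj (Vr n H r (g l'))))"
      unfolding y cnj_sum sum_product by (intro sum.cong refl) (simp add: algebra_simps)
    also have "\<dots> = (\<Sum>l<k. \<Sum>l'<k. x l * cnj (x l') * (\<Sum>r<N. Vr n H r (g l) * cnj (Vr n H r (g l'))))"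
      by (simp add: sum_distrib_left sum.swap[of _ "{..<N}"])
    also have "\<dots> = (\<Sum>l<k. \<Sum>l'<k. if l' = l then x l * cnj (x l) else 0)"
    proof (intro sum.cong refl)
      fix l l' assume "l \<in> {..<k}" "l' \<in> {..<k}"
      hence ll: "l < k" "l' < k" by auto
      have "(\<Sum>r<N. Vr n H r (g l) * cnj (Vr n H r (g l'))) = (if g l = g l' then 1 else 0)"
        unfolding N_def by (rule col_r[OF n row gP gP]) (use ll in auto)
      moreover have "(g l = g l') = (l' = l)" using inj ll by (auto simp: inj_on_def)
      ultimately show "x l * cnj (x l') * (\<Sum>r<N. Vr n H r (g l) * cnj (Vr n H r (g l'))) = (if l' = l then x l * cnj (x l) else 0)"
        by simp
    qed
    also have "\<dots> = (\<Sum>l<k. x l * cnj (x l))" by (simp add: sum.delta)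
    finally have "complex_of_real (\<Sum>r<N. (cmod (y r))^2) = complex_of_real (\<Sum>l<k. (cmod (x l))^2)"
      by (simp only: of_real_sum complex_norm_square)
    hence "(\<Sum>r<N. (cmod (y r))^2) = (\<Sum>l<k. (cmod (x l))^2)" by (simp only: of_real_eq_iff)
    moreover have "(cnorm k x)^2 = (\<Sum>l<k. (cmod (x l))^2)"
      unfolding cnorm_def by (simp add: sum_nonneg)
    ultimately show "(\<Sum>i<N. (cmod (cinner k x (f i)))^2) = (cnorm k x)^2" by (simp add: y_def)
  qed
  have unif: "cnorm k (f r) = sqrt (1/2 + 1 / (2 * real n))" if "r < N" for r
  proof -
    have "complex_of_real (\<Sum>l<k. (cmod (f r l))^2) = (\<Sum>l<k. analysis_op f r l * cnj (analysis_op f r l))"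
      unfolding of_real_sum complex_norm_square by (simp add: fa mult.commute)
    also have "\<dots> = complex_of_real (1/2 + 1 / (2 * real n))"
      using G[OF that that] hbd[OF that] by simp
    finally have "(\<Sum>l<k. (cmod (f r l))^2) = 1/2 + 1 / (2 * real n)" by (simp only: of_real_eq_iff)
    then show ?thesis by (simp add: cnorm_def)
  qed
  have equi: "cmod (cinner k (f r) (f s)) = 1 / (2 * real n)" if "r < N" "s < N" "r \<noteq> s" for r s
  proof -
    have "cinner k (f r) (f s) = cnj (\<Sum>l<k. analysis_op f r l * cnj (analysis_op f s l))"
      by (simp add: cinner_def fa mult.commute)
    also have "\<dots> = cnj (hadamard_block n H r s / (2 * of_nat n))"
      using G[OF that(1,2)] that(3) by simp
    finally show ?thesis using hbm[OF that(1,2)] n by (simp add: norm_divide)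
  qed
  have "seidel_of_cetf N k f Q"
    unfolding seidel_of_cetf_def cetf_def
  proof (intro conjI allI impI)
    show "parseval_frame N k f" by (rule parseval)
    show "\<exists>c. \<forall>i<N. cnorm k (f i) = c" using unif by blast
    show "\<exists>c. \<forall>i<N. \<forall>j<N. i \<noteq> j \<longrightarrow> cmod (cinner k (f i) (f j)) = c" using equi by blast
    fix i j assume "i < N" "j < N"
    then show "Q j i = cnj (Q i j)" by (auto simp: Q_def hadamard_block_def mult.commute)
  next
    fix i assume "i < N" then show "Q i i = 0" by (simp add: Q_def hbd)
  next
    fix i j assume "i < N" "j < N" "i \<noteq> j"
    then show "cmod (Q i j) = 1" by (simp add: Q_def hbm)
  next
    fix i j assume ij: "i < N" "j < N"
    show "(\<Sum>l<k. analysis_op f i l * cnj (analysis_op f j l)) =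
          (if i = j then of_real (real k / real N) else 0)
          + of_real (sqrt (real k * (real N - real k) / ((real N)^2 * (real N - 1)))) * Q i j"
      unfolding G[OF ij] sq kN Q_def using n hbd[OF ij(1)]
      by (cases "i = j") (simp_all add: field_simps)
  qed
  then show ?thesis unfolding Q_def N_def k_def by blast
qed

end
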